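(* Let $d\ge2$, $p_c(\mathbb{Z}^d)<p\le 1$, and let $c_1,c_2,c_3,c_4,c_5>0$. There exists a constant $C=C(c_1,c_2,c_3,c_4,c_5,d,p)>0$ such that for every $n$, every $\omega\in H_n(c_1,c_2,c_3,c_4,c_5)$ and every edge $e\in\mathbb{E}_d(n)$, \[ |\phi(n)(\omega)-\phi(n)(\omega^e)|\le \frac{C}{n^d}. \]
   Context: Let $\mathbb{T}^d(n)=\mathbb{Z}^d/n\mathbb{Z}^d$ with edge set $\mathbb{E}_d(n)$, $\Omega=\{0,1\}^{\mathbb{E}_d(n)}$ with the Bernoulli($p$) product measure; $e$ is open in $\omega$ if $\omega(e)=1$. $C_d(n)(\omega)$ is the largest open connected component (ties broken by a fixed deterministic rule). For $e\in\mathbb{E}_d(n)$, $\omega^e$ agrees with $\omega$ off $e$ and $\omega^e(e)=1-\omega(e)$. For a nonempty vertex set $A\subset C_d(n)(\eta)$, $\psi_A(\eta)=|\partial A(\eta)|/|A|$ where $\partial A(\eta)$ is the set of edges open in $\eta$ with exactly one endpoint in $A$; the Cheeger constant is $\phi(n)(\eta)=\min\{\psi_A(\eta):\emptyset\ne A\subset C_d(n)(\eta),\ |A|\le|C_d(n)(\eta)|/2\}$; such $A$ are called admissible for $\eta$. Define the events $H^1_n(c_1)=\{|C_d(n)(\omega)|>c_1n^d\}$; $H^2_n(c_2,c_3)=\{c_2/n<\phi(n)(\omega)<c_3/n\}$; $H^3_n=\{\forall e\in\mathbb{E}_d(n):\ |C_d(n)(\omega)\triangle C_d(n)(\omega^e)|\le\sqrt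 n\}$; $H^4_n(c_4)=\{\exists A$ admissible for $\omega$ with $|A|>c_4n^d$ and $\psi_A(\omega)=\phi(n)(\omega)\}$; $H^5_n(c_5)=\{\forall e\in\mathbb{E}_d(n)\ \exists A$ admissible for $\omega^e$ with $|A|>c_5n^d$ and $\psi_A(\omega^e)=\phi(n)(\omega^e)\}$; and $H_n(c_1,\dots,c_5)=H^1_n(c_1)\cap H^2_n(c_2,c_3)\cap H^3_n\cap H^4_n(c_4)\cap H^5_n(c_5)$. *)

theory Defs
  imports "HOL-Probability.Probability"
begin

(* Vertices of Z^d and of the torus: integer vectors indexed by nat,
   with all coordinates >= d equal to 0. Edges are 2-element vertex sets. *)
type_synonym vtx = "nat \<Rightarrow> int"
type_synonym edge = "vtx set"
type_synonym config = "edge \<Rightarrow> bool"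

definition zd_V :: "nat \<Rightarrow> vtx set" where
  "zd_V d = {x. \<forall>i\<ge>d. x i = 0}"

definition zd_E :: "nat \<Rightarrow> edge set" where
  "zd_E d = {{x, y} | x y. x \<in> zd_V d \<and> y \<in> zd_V d \<and>
      (\<exists>i<d. y i = x i + 1 \<and> (\<forall>j. j \<noteq> i \<longrightarrow> y j = x j))}"

definition zd_open_adj :: "nat \<Rightarrow> config \<Rightarrow> vtx \<Rightarrow> vtx \<Rightarrow> bool" where
  "zd_open_adj d \<omega> x y \<longleftrightarrow> {x, y} \<in> zd_E d \<and> \<omega> {x, y}"

definition perc_measure :: "nat \<Rightarrow> real \<Rightarrow> config measure" where
  "perc_measure d p = PiM (zd_E d) (\<lambda>_. measure_pmf (bernoulli_pmf p))"

definition theta :: "nat \<Rightarrow> real \<Rightarrow> real" where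
  "theta d p = measure (perc_measure d p)
     {\<omega> \<in> space (perc_measure d p). infinite {y. (zd_open_adj d \<omega>)\<^sup>*\<^sup>* (\<lambda>_. 0) y}}"

definition p_c :: "nat \<Rightarrow> real" where
  "p_c d = Sup {p \<in> {0..1}. theta d p = 0}"

definition torus_V :: "nat \<Rightarrow> nat \<Rightarrow> vtx set" where
  "torus_V d n = {x. (\<forall>i<d. 0 \<le> x i \<and> x i < int n) \<and> (\<forall>i\<ge>d. x i = 0)}"

definition torus_E :: "nat \<Rightarrow> nat \<Rightarrow> edge set" where
  "torus_E d n = {{x, y} | x y. x \<in> torus_V d n \<and> y \<in> torus_V d n \<and> x \<noteq> y \<and>
      (\<exists>i<d. y i = (x i + 1) mod int n \<and> (\<forall>j. j \<noteq> i \<longrightarrow> y j = x j))}"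

definition open_adj :: "nat \<Rightarrow> nat \<Rightarrow> config \<Rightarrow> vtx \<Rightarrow> vtx \<Rightarrow> bool" where
  "open_adj d n \<omega> x y \<longleftrightarrow> {x, y} \<in> torus_E d n \<and> \<omega> {x, y}"

definition comp :: "nat \<Rightarrow> nat \<Rightarrow> config \<Rightarrow> vtx \<Rightarrow> vtx set" where
  "comp d n \<omega> x = {y. (open_adj d n \<omega>)\<^sup>*\<^sup>* x y}"

definition comps :: "nat \<Rightarrow> nat \<Rightarrow> config \<Rightarrow> vtx set set" where
  "comps d n \<omega> = comp d n \<omega> ` torus_V d n"

definition largest_comps :: "nat \<Rightarrow> nat \<Rightarrow> config \<Rightarrow> vtx set set" where
  "largest_comps d n \<omega> = {K \<in> comps d n \<omega>. \<forall>K' \<in> comps d n \<omega>. card K' \<le> card K}"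

definition Cl :: "(vtx set set \<Rightarrow> vtx set) \<Rightarrow> nat \<Rightarrow> nat \<Rightarrow> config \<Rightarrow> vtx set" where
  "Cl tie d n \<omega> = tie (largest_comps d n \<omega>)"

definition flip_edge :: "config \<Rightarrow> edge \<Rightarrow> config" where
  "flip_edge \<omega> e = fun_upd \<omega> e (\<not> \<omega> e)"

definition bdry :: "nat \<Rightarrow> nat \<Rightarrow> config \<Rightarrow> vtx set \<Rightarrow> edge set" where
  "bdry d n \<omega> A = {e \<in> torus_E d n. \<omega> e \<and> card (e \<inter> A) = 1}"

definition psi :: "nat \<Rightarrow> nat \<Rightarrow> config \<Rightarrow> vtx set \<Rightarrow> real" where
  "psi d n \<omega> A = real (card (bdry d n \<omega> A)) / real (card A)"

definition admissible :: "(vtx set set \<Rightarrow> vtx set) \<Rightarrow> nat \<Rightarrow> nat \<Rightarrow> config \<Rightarrow> vtx set \<Rightarrow> bool" where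
  "admissible tie d n \<omega> A \<longleftrightarrow> A \<noteq> {} \<and> A \<subseteq> Cl tie d n \<omega> \<and>
      real (card A) \<le> real (card (Cl tie d n \<omega>)) / 2"

definition cheeger :: "(vtx set set \<Rightarrow> vtx set) \<Rightarrow> nat \<Rightarrow> nat \<Rightarrow> config \<Rightarrow> real" where
  "cheeger tie d n \<omega> = Min (psi d n \<omega> ` {A. admissible tie d n \<omega> A})"

definition H1 where
  "H1 tie d n c1 \<omega> \<longleftrightarrow> real (card (Cl tie d n \<omega>)) > c1 * real n ^ d"

definition H2 where
  "H2 tie d n c2 c3 \<omega> \<longleftrightarrow> c2 / real n < cheeger tie d n \<omega> \<and> cheeger tie d n \<omega> < c3 / real n"

definition H3 where
  "H3 tie d n \<omega> \<longleftrightarrow> (\<forall>e \<in> torus_E d n.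
      real (card (Cl tie d n \<omega> - Cl tie d n (flip_edge \<omega> e) \<union> (Cl tie d n (flip_edge \<omega> e) - Cl tie d n \<omega>)))
        \<le> sqrt (real n))"

definition H4 where
  "H4 tie d n c4 \<omega> \<longleftrightarrow> (\<exists>A. admissible tie d n \<omega> A \<and> real (card A) > c4 * real n ^ d \<and>
      psi d n \<omega> A = cheeger tie d n \<omega>)"

definition H5 where
  "H5 tie d n c5 \<omega> \<longleftrightarrow> (\<forall>e \<in> torus_E d n. \<exists>A. admissible tie d n (flip_edge \<omega> e) A \<and>
      real (card A) > c5 * real n ^ d \<and> psi d n (flip_edge \<omega> e) A = cheeger tie d n (flip_edge \<omega> e))"

definition H where
  "H tie d n c1 c2 c3 c4 c5 \<omega> \<longleftrightarrow> H1 tie d n c1 \<omega> \<and> H2 tie d n c2 c3 \<omega> \<and> H3 tie d n \<omega> \<and>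
      H4 tie d n c4 \<omega> \<and> H5 tie d n c5 \<omega>"

end

theory Submission
  imports Defs
begin


lemma finite_torus_V: "finite (torus_V d n)"
proof -
  have inj: "inj_on (\<lambda>x. restrict x {..<d}) (torus_V d n)"
  proof (intro inj_onI ext)
    fix x y i assume x: "x \<in> torus_V d n" and y: "y \<in> torus_V d n"
      and eq: "restrict x {..<d} = restrict y {..<d}"
    show "x i = y i"
    proof (cases "i < d")
      case True
      then have "restrict x {..<d} i = restrict y {..<d} i" using eq by simp
      then show ?thesis using True by simp
    next
      case False
      then show ?thesis using x y by (simp add: torus_V_def)
    qed
  qed
  have "(\<lambda>x. restrict x {..<d}) ` torus_V d n \<subseteq> PiE {..<d} (\<lambda>_. {0..<int n})"
    by (auto simp: torus_V_def image_subset_iff restrict_PiE_iff)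
  moreover have "finite (PiE {..<d} (\<lambda>_. {0..<int n}))"
    by (intro finite_PiE) auto
  ultimately have "finite ((\<lambda>x. restrict x {..<d}) ` torus_V d n)"
    using finite_subset by blast
  then show ?thesis using finite_imageD inj by blast
qed

lemma finite_torus_E: "finite (torus_E d n)"
proof -
  have "torus_E d n \<subseteq> (\<lambda>p. {fst p, snd p}) ` (torus_V d n \<times> torus_V d n)"
  proof
    fix f assume "f \<in> torus_E d n"
    then obtain x y where f: "f = {x,y}" "x \<in> torus_V d n" "y \<in> torus_V d n"
      unfolding torus_E_def by blast
    show "f \<in> (\<lambda>p. {fst p, snd p}) ` (torus_V d n \<times> torus_V d n)"
      by (rule image_eqI[of _ _ "(x,y)"]) (use f in auto)
  qed
  then show ?thesis using finite_torus_V finite_subset by blast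
qed

lemma torus_E_elem: "f \<in> torus_E d n \<Longrightarrow> \<exists>u v. f = {u,v} \<and> u \<noteq> v"
  by (auto simp: torus_E_def)

lemma open_adj_V: "open_adj d n \<omega> x y \<Longrightarrow> y \<in> torus_V d n"
proof -
  assume "open_adj d n \<omega> x y"
  then obtain a b where "{x,y} = {a,b}" "a \<in> torus_V d n" "b \<in> torus_V d n"
    by (auto simp: open_adj_def torus_E_def)
  then show ?thesis by (metis insertCI insertE singletonD)
qed

lemma open_adj_sym: "open_adj d n \<omega> x y \<Longrightarrow> open_adj d n \<omega> y x"
  by (simp add: open_adj_def insert_commute)

lemma comp_sub: "x \<in> torus_V d n \<Longrightarrow> comp d n \<omega> x \<subseteq> torus_V d n"
proof
  fix y assume x: "x \<in> torus_V d n" and "y \<in> comp d n \<omega> x"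
  then have "(open_adj d n \<omega>)\<^sup>*\<^sup>* x y" by (simp add: comp_def)
  then show "y \<in> torus_V d n"
    by (induction rule: rtranclp_induct) (use x open_adj_V in auto)
qed

lemma comp_closed: "u \<in> comp d n \<omega> x \<Longrightarrow> open_adj d n \<omega> u v \<Longrightarrow> v \<in> comp d n \<omega> x"
  by (auto simp: comp_def intro: rtranclp.rtrancl_into_rtrancl)

lemma Cl_comp:
  assumes tie: "\<And>S. S \<noteq> {} \<Longrightarrow> tie S \<in> S" and n: "n \<ge> 1"
  shows "\<exists>x\<in>torus_V d n. Cl tie d n \<omega> = comp d n \<omega> x"
proof -
  have z: "(\<lambda>_. 0) \<in> torus_V d n" using n by (simp add: torus_V_def)
  have fin: "finite (comps d n \<omega>)" by (simp add: comps_def finite_torus_V)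
  have ne: "comps d n \<omega> \<noteq> {}" using z by (auto simp: comps_def)
  define m where "m = Max (card ` comps d n \<omega>)"
  have "m \<in> card ` comps d n \<omega>" unfolding m_def using fin ne by (intro Max_in) auto
  then obtain K where K: "K \<in> comps d n \<omega>" "card K = m" by auto
  have "\<forall>K'\<in>comps d n \<omega>. card K' \<le> card K"
  proof
    fix K' assume "K' \<in> comps d n \<omega>"
    then have "card K' \<le> m" unfolding m_def using fin by (intro Max_ge) auto
    then show "card K' \<le> card K" using K(2) by simp
  qed
  then have "K \<in> largest_comps d n \<omega>" using K(1) by (simp add: largest_comps_def)
  then have "largest_comps d n \<omega> \<noteq> {}" by auto
  then have "tie (largest_comps d n \<omega>) \<in> largest_comps d n \<omega>" by (rule tie)
  then have "Cl tie d n \<omega> \<in> comps d n \<omega>" by (simp add: Cl_def largest_comps_def)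
  then show ?thesis by (auto simp: comps_def)
qed

lemma card_pair_1: "u \<noteq> v \<Longrightarrow> card ({u,v} \<inter> X) = 1 \<longleftrightarrow> (u \<in> X) \<noteq> (v \<in> X)"
  by (cases "u \<in> X"; cases "v \<in> X") auto


lemma transfer:
  fixes K K' A :: "vtx set" and s :: nat
  assumes finK: "finite K" and finK': "finite K'"
    and closed: "\<And>u v. u \<in> K' \<Longrightarrow> open_adj d n \<omega>' u v \<Longrightarrow> v \<in> K'"
    and AK: "A \<subseteq> K" and A2: "2 * card A \<le> card K"
    and agree: "\<And>f. f \<noteq> e \<Longrightarrow> \<omega>' f = \<omega> f"
    and sd: "card ((K - K') \<union> (K' - K)) \<le> s" and sA: "s < card A"
  shows "\<exists>B. B \<noteq> {} \<and> B \<subseteq> K' \<and> 2 * card B \<le> card K' \<and>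
     card (bdry d n \<omega>' B) \<le> card (bdry d n \<omega> A) + 1 \<and> card A \<le> card B + s"
proof -
  have finA: "finite A" using AK finK finite_subset by blast
  have edge: "\<exists>u v. f = {u,v} \<and> u \<noteq> v \<and> (u \<in> K' \<longleftrightarrow> v \<in> K')"
    if fe: "f \<in> torus_E d n" "\<omega>' f" for f
  proof -
    obtain u v where f: "f = {u,v}" "u \<noteq> v" using torus_E_elem fe(1) by blast
    have "open_adj d n \<omega>' u v" using fe f by (simp add: open_adj_def)
    then have "open_adj d n \<omega>' v u" by (rule open_adj_sym)
    have "u \<in> K' \<longleftrightarrow> v \<in> K'"
      using closed \<open>open_adj d n \<omega>' u v\<close> \<open>open_adj d n \<omega>' v u\<close> by blast
    then show ?thesis using f by blast
  qed
  define B0 where "B0 = A \<inter> K'"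
  have bd0: "bdry d n \<omega>' B0 \<subseteq> insert e (bdry d n \<omega> A)"
  proof
    fix f assume f: "f \<in> bdry d n \<omega>' B0"
    show "f \<in> insert e (bdry d n \<omega> A)"
    proof (cases "f = e")
      case False
      have fE: "f \<in> torus_E d n" "\<omega>' f" "card (f \<inter> B0) = 1" using f by (auto simp: bdry_def)
      then obtain u v where uv: "f = {u,v}" "u \<noteq> v" "u \<in> K' \<longleftrightarrow> v \<in> K'" using edge by blast
      have "(u \<in> B0) \<noteq> (v \<in> B0)" using fE(3) uv(1,2) card_pair_1[of u v B0] by simp
      then have "(u \<in> A) \<noteq> (v \<in> A)" using uv(3) by (auto simp: B0_def)
      then have "card (f \<inter> A) = 1" using uv(1,2) card_pair_1[of u v A] by simp
      moreover have "\<omega> f" using agree[OF False] fE by simp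
      ultimately show ?thesis using fE by (simp add: bdry_def)
    qed simp
  qed
  have finE: "finite (bdry d n \<omega> A)" using finite_torus_E by (simp add: bdry_def)
  have cb0: "card (bdry d n \<omega>' B0) \<le> card (bdry d n \<omega> A) + 1"
  proof -
    have "card (bdry d n \<omega>' B0) \<le> card (insert e (bdry d n \<omega> A))"
      using bd0 finE by (intro card_mono) auto
    also have "\<dots> \<le> card (bdry d n \<omega> A) + 1" using finE by (simp add: card_insert_if)
    finally show ?thesis .
  qed
  have c1: "card A = card B0 + card (A - K')"
    unfolding B0_def using finA by (rule card_Int_Diff)
  have c2: "card (A - K') \<le> s"
  proof -
    have "A - K' \<subseteq> (K - K') \<union> (K' - K)" using AK by auto
    then have "card (A - K') \<le> card ((K - K') \<union> (K' - K))" using finK finK' by (intro card_mono) auto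
    then show ?thesis using sd by simp
  qed
  have c3: "card K \<le> card K' + s"
  proof -
    have "K \<subseteq> K' \<union> ((K - K') \<union> (K' - K))" by auto
    then have "card K \<le> card (K' \<union> ((K - K') \<union> (K' - K)))" using finK finK' by (intro card_mono) auto
    also have "\<dots> \<le> card K' + card ((K - K') \<union> (K' - K))" by (rule card_Un_le)
    finally show ?thesis using sd by simp
  qed
  have B0K': "B0 \<subseteq> K'" by (simp add: B0_def)
  show ?thesis
  proof (cases "2 * card B0 \<le> card K'")
    case True
    have ne: "B0 \<noteq> {}"
    proof
      assume "B0 = {}"
      then show False using c1 c2 sA by simp
    qed
    have cA: "card A \<le> card B0 + s" using c1 c2 by linarith
    show ?thesis using ne True cb0 cA B0K' by (intro exI[of _ B0] conjI) (assumption+)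
  next
    case False
    define B1 where "B1 = K' - B0"
    have cB0K: "card B0 \<le> card K'" using B0K' finK' card_mono by blast
    have fB0: "finite B0" using B0K' finK' finite_subset by blast
    have cB1': "card B1 = card K' - card B0" unfolding B1_def using card_Diff_subset[OF fB0 B0K'] .
    have cB1: "card B1 + card B0 = card K'" using cB1' cB0K by simp
    have bB1: "bdry d n \<omega>' B1 = bdry d n \<omega>' B0"
    proof -
      have "card (f \<inter> B1) = 1 \<longleftrightarrow> card (f \<inter> B0) = 1" if fe: "f \<in> torus_E d n" "\<omega>' f" for f
      proof -
        obtain u v where uv: "f = {u,v}" "u \<noteq> v" "u \<in> K' \<longleftrightarrow> v \<in> K'" using edge fe by blast
        have "(u \<in> B1) \<noteq> (v \<in> B1) \<longleftrightarrow> (u \<in> B0) \<noteq> (v \<in> B0)"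
          using uv(3) B0K' by (auto simp: B1_def)
        then show ?thesis using uv(1,2) card_pair_1[of u v B1] card_pair_1[of u v B0] by simp
      qed
      then show ?thesis unfolding bdry_def by blast
    qed
    have cA: "card A \<le> card B1 + s" using cB1 c1 c2 c3 A2 cB0K by linarith
    have ne: "B1 \<noteq> {}"
    proof
      assume "B1 = {}"
      then show False using cA sA by simp
    qed
    have sub: "B1 \<subseteq> K'" by (simp add: B1_def)
    have two: "2 * card B1 \<le> card K'" using False cB1 by linarith
    have cb1: "card (bdry d n \<omega>' B1) \<le> card (bdry d n \<omega> A) + 1" using bB1 cb0 by simp
    show ?thesis using ne sub two cb1 cA by (intro exI[of _ B1] conjI) (assumption+)
  qed
qed


lemma Cl_facts:
  assumes tie: "\<And>S. S \<noteq> {} \<Longrightarrow> tie S \<in> S" and n: "n \<ge> 1"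
  shows "finite (Cl tie d n \<omega>)"
    and "\<And>u v. u \<in> Cl tie d n \<omega> \<Longrightarrow> open_adj d n \<omega> u v \<Longrightarrow> v \<in> Cl tie d n \<omega>"
proof -
  obtain x where x: "x \<in> torus_V d n" "Cl tie d n \<omega> = comp d n \<omega> x"
    using Cl_comp[OF tie n] by blast
  show "finite (Cl tie d n \<omega>)" using finite_subset[OF comp_sub[OF x(1)] finite_torus_V] x(2) by simp
  show "\<And>u v. u \<in> Cl tie d n \<omega> \<Longrightarrow> open_adj d n \<omega> u v \<Longrightarrow> v \<in> Cl tie d n \<omega>"
    unfolding x(2) by (rule comp_closed)
qed

lemma adm_finite: "finite (Cl tie d n \<omega>) \<Longrightarrow> finite {A. admissible tie d n \<omega> A}"
proof -
  assume f: "finite (Cl tie d n \<omega>)"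
  have "{A. admissible tie d n \<omega> A} \<subseteq> Pow (Cl tie d n \<omega>)" by (auto simp: admissible_def)
  then show ?thesis using f finite_subset by blast
qed

lemma cheeger_le:
  assumes f: "finite (Cl tie d n \<omega>)" and adm: "admissible tie d n \<omega> B"
  shows "cheeger tie d n \<omega> \<le> psi d n \<omega> B"
proof -
  have "finite (psi d n \<omega> ` {A. admissible tie d n \<omega> A})" using adm_finite[OF f] by (rule finite_imageI)
  moreover have "psi d n \<omega> B \<in> psi d n \<omega> ` {A. admissible tie d n \<omega> A}" using adm by blast
  ultimately show ?thesis unfolding cheeger_def by (rule Min_le)
qed

lemma psi_nonneg: "0 \<le> psi d n \<omega> A" by (simp add: psi_def)

lemma cheeger_nonneg:
  assumes "finite (Cl tie d n \<omega>)" "admissible tie d n \<omega> B"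
  shows "0 \<le> cheeger tie d n \<omega>"
proof -
  have "cheeger tie d n \<omega> \<in> psi d n \<omega> ` {A. admissible tie d n \<omega> A}"
    unfolding cheeger_def
  proof (rule Min_in)
    show "finite (psi d n \<omega> ` {A. admissible tie d n \<omega> A})" using adm_finite[OF assms(1)] by (rule finite_imageI)
    show "psi d n \<omega> ` {A. admissible tie d n \<omega> A} \<noteq> {}" using assms(2) by blast
  qed
  then show ?thesis using psi_nonneg by auto
qed

lemma psi_le_card:
  assumes "admissible tie d n \<omega> A" "finite (Cl tie d n \<omega>)"
  shows "psi d n \<omega> A \<le> real (card (torus_E d n))"
proof -
  have fA: "finite A" using assms finite_subset unfolding admissible_def by blast
  then have cA: "card A \<ge> 1" using assms(1) by (simp add: admissible_def Suc_le_eq card_gt_0_iff)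
  have "card (bdry d n \<omega> A) \<le> card (torus_E d n)"
    using finite_torus_E by (intro card_mono) (auto simp: bdry_def)
  then have "real (card (bdry d n \<omega> A)) / real (card A) \<le> real (card (torus_E d n)) / 1"
    using cA by (intro frac_le) auto
  then show ?thesis by (simp add: psi_def)
qed

lemma transfer_cheeger:
  assumes tie: "\<And>S. S \<noteq> {} \<Longrightarrow> tie S \<in> S" and n: "n \<ge> 1"
    and agree: "\<And>f. f \<noteq> e \<Longrightarrow> \<omega>' f = \<omega> f"
    and adm: "admissible tie d n \<omega> A"
    and sd: "card ((Cl tie d n \<omega> - Cl tie d n \<omega>') \<union> (Cl tie d n \<omega>' - Cl tie d n \<omega>)) \<le> s"
    and sA: "s < card A"
  shows "cheeger tie d n \<omega>' \<le> (psi d n \<omega> A * real (card A) + 1) / (real (card A) - real s)"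
proof -
  have fK: "finite (Cl tie d n \<omega>)" by (rule Cl_facts(1)[OF tie n])
  have fK': "finite (Cl tie d n \<omega>')" by (rule Cl_facts(1)[OF tie n])
  have cl: "\<And>u v. u \<in> Cl tie d n \<omega>' \<Longrightarrow> open_adj d n \<omega>' u v \<Longrightarrow> v \<in> Cl tie d n \<omega>'"
    by (rule Cl_facts(2)[OF tie n])
  have AK: "A \<subseteq> Cl tie d n \<omega>" using adm by (simp add: admissible_def)
  have A2: "2 * card A \<le> card (Cl tie d n \<omega>)" using adm by (simp add: admissible_def)
  obtain B where B0: "B \<noteq> {} \<and> B \<subseteq> Cl tie d n \<omega>' \<and> 2 * card B \<le> card (Cl tie d n \<omega>') \<and>
     card (bdry d n \<omega>' B) \<le> card (bdry d n \<omega> A) + 1 \<and> card A \<le> card B + s"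
    using transfer[OF fK fK' cl AK A2 agree sd sA] by (rule exE)
  then have B: "B \<noteq> {}" "B \<subseteq> Cl tie d n \<omega>'" "2 * card B \<le> card (Cl tie d n \<omega>')"
     "card (bdry d n \<omega>' B) \<le> card (bdry d n \<omega> A) + 1" "card A \<le> card B + s"
    by blast+
  have admB: "admissible tie d n \<omega>' B" using B(1,2,3) by (simp add: admissible_def)
  have "real (card A) > 0" using sA by simp
  have psiA: "psi d n \<omega> A * real (card A) = real (card (bdry d n \<omega> A))"
    using \<open>real (card A) > 0\<close> by (simp add: psi_def)
  have pos: "real (card A) - real s > 0" using sA by simp
  have le: "real (card A) - real s \<le> real (card B)" using B(5) by simp
  have "cheeger tie d n \<omega>' \<le> psi d n \<omega>' B" by (rule cheeger_le[OF fK' admB])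
  also have "\<dots> = real (card (bdry d n \<omega>' B)) / real (card B)" by (simp add: psi_def)
  also have "\<dots> \<le> (real (card (bdry d n \<omega> A)) + 1) / (real (card A) - real s)"
    using B(4) pos le by (intro frac_le) auto
  finally show ?thesis using psiA by simp
qed

lemma key_ineq:
  fixes x phi a s M L :: real
  assumes x: "x \<le> (phi * a + 1) / (a - s)" and aM: "a > M" and M: "M > 0" and s: "0 \<le> s"
    and s2: "2 * s \<le> a" and phi: "0 \<le> phi" and L: "phi * s \<le> L"
  shows "x \<le> phi + 2 * (1 + L) / M"
proof -
  have a: "a > 0" using aM M by simp
  have as: "a - s \<ge> a / 2" using s2 by simp
  have as0: "a - s > 0" using as a by simp
  have eq: "(phi * a + 1) / (a - s) = phi + (phi * s + 1) / (a - s)"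
    using as0 by (simp add: field_simps)
  have L0: "0 \<le> 1 + L" using phi s L mult_nonneg_nonneg[OF phi s] by linarith
  have "(phi * s + 1) / (a - s) \<le> (1 + L) / (a - s)"
    using as0 L by (intro divide_right_mono) auto
  also have "\<dots> \<le> (1 + L) / (a / 2)"
    using as a L0 by (intro divide_left_mono) auto
  also have "\<dots> = 2 * (1 + L) / a" by simp
  also have "\<dots> \<le> 2 * (1 + L) / M"
    using aM M L0 by (intro divide_left_mono) auto
  finally show ?thesis using x eq by simp
qed




theorem claim2p3:
  fixes d :: nat and p c1 c2 c3 c4 c5 :: real
    and tie :: "vtx set set \<Rightarrow> vtx set"
  assumes "d \<ge> 2" and "p_c d < p" and "p \<le> 1"
    and "c1 > 0" and "c2 > 0" and "c3 > 0" and "c4 > 0" and "c5 > 0"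
    and "\<And>S. S \<noteq> {} \<Longrightarrow> tie S \<in> S"
  shows "\<exists>C > 0. \<forall>n \<ge> 1. \<forall>\<omega>. H tie d n c1 c2 c3 c4 c5 \<omega> \<longrightarrow>
           (\<forall>e \<in> torus_E d n.
              \<bar>cheeger tie d n \<omega> - cheeger tie d n (flip_edge \<omega> e)\<bar> \<le> C / real n ^ d)"
proof -
  note d2 = assms(1) and c3 = assms(6) and c4 = assms(7) and c5 = assms(8) and tie = assms(9)
  define N :: nat where "N = nat \<lceil>2/c4 + 2/c5\<rceil>"
  define K :: nat where "K = Max ((\<lambda>m. card (torus_E d m)) ` {..N})"
  define D1 where "D1 = 2*(1+c3)/c4"
  define L2 where "L2 = c3 + D1"
  define D2 where "D2 = 2*(1+L2)/c5"
  define C where "C = D1 + D2 + (c3 + real K) * real N ^ d + 1"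
  have D1pos: "D1 > 0" using c3 c4 by (simp add: D1_def)
  have L2pos: "L2 > 0" using c3 D1pos by (simp add: L2_def)
  have D2pos: "D2 > 0" using L2pos c5 by (simp add: D2_def)
  have KN: "0 \<le> (c3 + real K) * real N ^ d" using c3 by simp
  have Cpos: "C > 0" using D1pos D2pos KN by (simp add: C_def)
  have main: "\<bar>cheeger tie d n \<omega> - cheeger tie d n (flip_edge \<omega> e)\<bar> \<le> C / real n ^ d"
    if n: "n \<ge> 1" and Hw: "H tie d n c1 c2 c3 c4 c5 \<omega>" and e: "e \<in> torus_E d n" for n \<omega> e
  proof -
    define \<omega>' where "\<omega>' = flip_edge \<omega> e"
    define \<phi> where "\<phi> = cheeger tie d n \<omega>"
    define \<phi>' where "\<phi>' = cheeger tie d n \<omega>'"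
    define X where "X = (Cl tie d n \<omega> - Cl tie d n \<omega>') \<union> (Cl tie d n \<omega>' - Cl tie d n \<omega>)"
    have H2: "\<phi> < c3 / real n" using Hw by (simp add: H_def H2_def \<phi>_def)
    have H3: "real (card X) \<le> sqrt (real n)" using Hw e by (simp add: H_def H3_def X_def \<omega>'_def)
    obtain A where A: "admissible tie d n \<omega> A" "real (card A) > c4 * real n ^ d" "psi d n \<omega> A = \<phi>"
      using Hw by (auto simp: H_def H4_def \<phi>_def)
    obtain A' where A': "admissible tie d n \<omega>' A'" "real (card A') > c5 * real n ^ d" "psi d n \<omega>' A' = \<phi>'"
      using Hw e by (auto simp: H_def H5_def \<phi>'_def \<omega>'_def)
    have fK: "finite (Cl tie d n \<omega>)" by (rule Cl_facts(1)[OF tie n])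
    have fK': "finite (Cl tie d n \<omega>')" by (rule Cl_facts(1)[OF tie n])
    have agree1: "\<And>f. f \<noteq> e \<Longrightarrow> \<omega>' f = \<omega> f" by (simp add: \<omega>'_def flip_edge_def)
    have agree2: "\<And>f. f \<noteq> e \<Longrightarrow> \<omega> f = \<omega>' f" by (simp add: \<omega>'_def flip_edge_def)
    have p0: "0 \<le> \<phi>" unfolding \<phi>_def by (rule cheeger_nonneg[OF fK A(1)])
    have p0': "0 \<le> \<phi>'" unfolding \<phi>'_def by (rule cheeger_nonneg[OF fK' A'(1)])
    have rn: "real n \<ge> 1" using n by simp
    have goal: "\<bar>\<phi> - \<phi>'\<bar> \<le> C / real n ^ d"
    proof (cases "n \<le> N")
      case True
      have "c3 / real n \<le> c3 / 1" using c3 rn by (intro divide_left_mono) auto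
      then have pc: "\<phi> \<le> c3" using H2 by simp
      have "card (torus_E d n) \<le> K" unfolding K_def using True by (intro Max_ge) auto
      then have pK: "\<phi>' \<le> real K" using psi_le_card[OF A'(1) fK'] A'(3) by linarith
      have ab: "\<bar>\<phi> - \<phi>'\<bar> \<le> c3 + real K" using pc pK p0 p0' by linarith
      have nN: "real n ^ d \<le> real N ^ d" using True by (intro power_mono) auto
      have npos: "real n ^ d > 0" using rn by simp
      have "c3 + real K \<le> (c3 + real K) * real N ^ d / real n ^ d"
      proof -
        have "(c3 + real K) * real n ^ d \<le> (c3 + real K) * real N ^ d"
          using nN c3 by (intro mult_left_mono) auto
        then show ?thesis using npos by (simp add: le_divide_eq)
      qed
      also have "\<dots> \<le> C / real n ^ d"
        using npos D1pos D2pos by (intro divide_right_mono) (auto simp: C_def)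
      finally show ?thesis using ab by linarith
    next
      case False
      have Nx: "real N \<ge> 2/c4 + 2/c5" unfolding N_def by linarith
      have nx: "real n > 2/c4 + 2/c5" using False Nx by simp
      have "real n > 2/c4" using nx c5 by (smt (verit) divide_pos_pos)
      then have c4n: "c4 * real n > 2" using c4 by (simp add: divide_less_eq mult.commute)
      have "real n > 2/c5" using nx c4 by (smt (verit) divide_pos_pos)
      then have c5n: "c5 * real n > 2" using c5 by (simp add: divide_less_eq mult.commute)
      have nd: "real n * real n \<le> real n ^ d"
      proof -
        have "real n ^ 2 \<le> real n ^ d" using d2 rn by (intro power_increasing) auto
        then show ?thesis by (simp add: power2_eq_square)
      qed
      have sq: "sqrt (real n) \<le> real n"
      proof -
        have "1 \<le> sqrt (real n)" using rn by simp
        then have "sqrt (real n) * 1 \<le> sqrt (real n) * sqrt (real n)" by (intro mult_left_mono) auto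
        then show ?thesis using rn by simp
      qed
      define s where "s = card X"
      have sn: "real s \<le> real n" using H3 sq by (simp add: s_def)
      have s0: "0 \<le> real s" by simp
      have nnd: "real n \<le> real n ^ d" using nd rn by (smt (verit) mult_le_cancel_left1)
      have nd_pos: "real n ^ d > 0" using rn by simp
      have c4nd: "c4 * (real n * real n) \<le> c4 * real n ^ d" using nd c4 by simp
      have "2 * real n < c4 * real n * real n" using c4n rn by (intro mult_strict_right_mono) auto
      then have s2a: "2 * real s \<le> real (card A)" using A(2) c4nd sn by (simp add: mult.assoc)
      have sA: "s < card A"
      proof -
        have "real s < real (card A)" using s2a rn sn A(2) c4 nd_pos
          by (smt (verit) mult_pos_pos)
        then show ?thesis by simp
      qed
      have sd1: "card ((Cl tie d n \<omega> - Cl tie d n \<omega>') \<union> (Cl tie d n \<omega>' - Cl tie d n \<omega>)) \<le> s"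
        by (simp add: s_def X_def)
      have t1: "\<phi>' \<le> (\<phi> * real (card A) + 1) / (real (card A) - real s)"
        using transfer_cheeger[OF tie n agree1 A(1) sd1 sA] A(3) by (simp add: \<phi>'_def)
      have ps: "\<phi> * real s \<le> c3"
      proof -
        have "\<phi> * real s \<le> (c3 / real n) * real n" using H2 sn p0 s0 by (intro mult_mono) auto
        then show ?thesis using rn by simp
      qed
      have M1: "c4 * real n ^ d > 0" using c4 nd_pos by simp
      have "\<phi>' \<le> \<phi> + 2 * (1 + c3) / (c4 * real n ^ d)"
        by (rule key_ineq[OF t1 A(2) M1 s0 s2a p0 ps])
      then have dir1: "\<phi>' \<le> \<phi> + D1 / real n ^ d" by (simp add: D1_def)
      have c5nd: "c5 * (real n * real n) \<le> c5 * real n ^ d" using nd c5 by simp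
      have "2 * real n < c5 * real n * real n" using c5n rn by (intro mult_strict_right_mono) auto
      then have s2a': "2 * real s \<le> real (card A')" using A'(2) c5nd sn by (simp add: mult.assoc)
      have sA': "s < card A'"
      proof -
        have "real s < real (card A')" using s2a' rn sn A'(2) c5 nd_pos
          by (smt (verit) mult_pos_pos)
        then show ?thesis by simp
      qed
      have XX: "(Cl tie d n \<omega>' - Cl tie d n \<omega>) \<union> (Cl tie d n \<omega> - Cl tie d n \<omega>') = X"
        unfolding X_def by blast
      have sd2: "card ((Cl tie d n \<omega>' - Cl tie d n \<omega>) \<union> (Cl tie d n \<omega> - Cl tie d n \<omega>')) \<le> s"
        unfolding XX by (simp add: s_def)
      have t2: "\<phi> \<le> (\<phi>' * real (card A') + 1) / (real (card A') - real s)"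
        using transfer_cheeger[OF tie n agree2 A'(1) sd2 sA'] A'(3) by (simp add: \<phi>_def)
      have ps': "\<phi>' * real s \<le> L2"
      proof -
        have "\<phi>' * real s \<le> (\<phi> + D1 / real n ^ d) * real s" using dir1 s0 by (intro mult_right_mono) auto
        also have "\<dots> = \<phi> * real s + D1 * (real s / real n ^ d)" by (simp add: algebra_simps)
        also have "\<dots> \<le> c3 + D1 * 1"
        proof -
          have "real s / real n ^ d \<le> 1" using sn nnd nd_pos by (simp add: divide_le_eq)
          then have "D1 * (real s / real n ^ d) \<le> D1 * 1" using D1pos by (intro mult_left_mono) auto
          then show ?thesis using ps by linarith
        qed
        finally show ?thesis by (simp add: L2_def)
      qed
      have M2: "c5 * real n ^ d > 0" using c5 nd_pos by simp
      have "\<phi> \<le> \<phi>' + 2 * (1 + L2) / (c5 * real n ^ d)"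
        by (rule key_ineq[OF t2 A'(2) M2 s0 s2a' p0' ps'])
      then have dir2: "\<phi> \<le> \<phi>' + D2 / real n ^ d" by (simp add: D2_def)
      have "\<bar>\<phi> - \<phi>'\<bar> \<le> D1 / real n ^ d + D2 / real n ^ d"
        using dir1 dir2 D1pos D2pos nd_pos by (smt (verit) divide_pos_pos)
      also have "\<dots> = (D1 + D2) / real n ^ d" by (simp add: add_divide_distrib)
      also have "\<dots> \<le> C / real n ^ d" using nd_pos KN by (intro divide_right_mono) (auto simp: C_def)
      finally show ?thesis .
    qed
    then show ?thesis by (simp add: \<phi>_def \<phi>'_def \<omega>'_def)
  qed
  show ?thesis
    apply (rule exI[of _ C])
    using Cpos main by blast
qed

end
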